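(* Let $(p_{ij})_{i,j\in\{0,1\}}$ be a transition matrix with all $p_{ij}\in(0,1)$ and $p_{ij}\ne\tfrac12$ for some $(i,j)$, and for $i\in\{0,1\}$, $n\in\mathbb N_0$ let $I_n^i$ be binomially $B(n,p_{i0})$ distributed. Let $(a_i(n))_{n\in\mathbb N_0}$, $(\varepsilon_i(n))_{n\in\mathbb N_0}$, $i\in\{0,1\}$, be real sequences satisfying $$a_i(n)=p_{i0}\mathbb E[a_0(I_n^i)]+p_{i1}\mathbb E[a_1(n-I_n^i)]+\varepsilon_i(n),\qquad i\in\{0,1\},\ n\in\mathbb N.$$ If $\varepsilon_i(n)=c_i+O(n^{-\alpha})$ for constants $c_i\in\mathbb R$, some $\alpha>0$ and both $i$, then as $n\to\infty$ $$a_i(n)=\frac{\pi_0c_0+\pi_1c_1}{H}\log n+O(1),\qquad i\in\{0,1\}.$$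
   Context: $\pi_0=p_{10}/(p_{01}+p_{10})$, $\pi_1=p_{01}/(p_{01}+p_{10})$, $H_i=-\sum_{j}p_{ij}\log p_{ij}$, $H=\pi_0H_0+\pi_1H_1$. *)

theory Defs
  imports "HOL-Probability.Probability" "HOL-Library.Landau_Symbols"
begin

definition stat_pi :: "(nat \<Rightarrow> nat \<Rightarrow> real) \<Rightarrow> nat \<Rightarrow> real" where
  "stat_pi p i = (if i = 0 then p 1 0 / (p 0 1 + p 1 0) else p 0 1 / (p 0 1 + p 1 0))"

definition row_entropy :: "(nat \<Rightarrow> nat \<Rightarrow> real) \<Rightarrow> nat \<Rightarrow> real" where
  "row_entropy p i = - (\<Sum>j\<in>{0,1}. p i j * ln (p i j))"

definition entropy_rate :: "(nat \<Rightarrow> nat \<Rightarrow> real) \<Rightarrow> real" where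
  "entropy_rate p = stat_pi p 0 * row_entropy p 0 + stat_pi p 1 * row_entropy p 1"

end

theory Submission imports Defs begin

definition bw :: "nat \<Rightarrow> real \<Rightarrow> nat \<Rightarrow> real" where
  "bw n r k = real (n choose k) * r^k * (1-r)^(n-k)"
definition BE :: "nat \<Rightarrow> real \<Rightarrow> (nat \<Rightarrow> real) \<Rightarrow> real" where
  "BE n r f = (\<Sum>k\<le>n. bw n r k * f k)"

lemma bw_nonneg: "0 \<le> r \<Longrightarrow> r \<le> 1 \<Longrightarrow> 0 \<le> bw n r k"
  by (simp add: bw_def)

lemma BE_expect:
  assumes "0 \<le> r" "r \<le> 1"
  shows "measure_pmf.expectation (binomial_pmf n r) f = BE n r f"
proof -
  have "measure_pmf.expectation (binomial_pmf n r) f = (\<Sum>a\<in>{..n}. pmf (binomial_pmf n r) a *\<^sub>R f a)"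
    using assms by (intro integral_measure_pmf) (auto simp: set_pmf_binomial_eq split: if_splits)
  also have "\<dots> = BE n r f" using assms by (simp add: BE_def bw_def)
  finally show ?thesis .
qed

lemma BE_one: "BE n r (\<lambda>_. 1) = 1"
  using binomial_ring[of r "1-r" n] by (simp add: BE_def bw_def mult_ac)

lemma BE_add: "BE n r (\<lambda>k. f k + g k) = BE n r f + BE n r g"
  by (simp add: BE_def algebra_simps sum.distrib)
lemma BE_cmult: "BE n r (\<lambda>k. x * f k) = x * BE n r f"
  by (simp add: BE_def algebra_simps sum_distrib_left)
lemma BE_const: "BE n r (\<lambda>k. x) = x"
  using BE_cmult[of n r x "\<lambda>_. 1"] by (simp add: BE_one)
lemma BE_diff: "BE n r (\<lambda>k. f k - g k) = BE n r f - BE n r g"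
  by (simp add: BE_def algebra_simps sum_subtractf)
lemma BE_mono: "0 \<le> r \<Longrightarrow> r \<le> 1 \<Longrightarrow> (\<And>k. k \<le> n \<Longrightarrow> f k \<le> g k) \<Longrightarrow> BE n r f \<le> BE n r g"
  unfolding BE_def by (intro sum_mono mult_left_mono) (auto simp: bw_nonneg)

lemma BE_rev: "BE n r (\<lambda>k. f (n - k)) = BE n (1-r) f"
proof -
  have "BE n r (\<lambda>k. f (n - k)) = (\<Sum>k\<in>{0..n}. bw n r k * f (n-k))" by (simp add: BE_def atMost_atLeast0)
  also have "\<dots> = (\<Sum>k\<in>{0..n}. bw n r (n-k) * f (n-(n-k)))"
    by (subst sum.atLeastAtMost_rev) simp
  also have "\<dots> = (\<Sum>k\<in>{0..n}. bw n (1-r) k * f k)"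
    by (intro sum.cong refl) (auto simp: bw_def binomial_symmetric[symmetric] mult_ac)
  finally show ?thesis by (simp add: BE_def atMost_atLeast0)
qed

lemma BE_mean: "BE n r real = n * r"
proof (cases n)
  case 0 then show ?thesis by (simp add: BE_def)
next
  case (Suc m)
  have "BE n r real = (\<Sum>k\<le>m. bw (Suc m) r (Suc k) * real (Suc k))"
    unfolding BE_def Suc by (subst sum.atMost_Suc_shift) (simp del: of_nat_Suc)
  also have "\<dots> = (\<Sum>k\<le>m. real (Suc m) * r * bw m r k)"
  proof (intro sum.cong refl)
    fix k assume "k \<in> {..m}"
    then have "k \<le> m" by simp
    have e: "real (Suc m choose Suc k) * real (Suc k) = real (Suc m) * real (m choose k)"
      using Suc_times_binomial_eq[of m k] by (metis of_nat_mult)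
    show "bw (Suc m) r (Suc k) * real (Suc k) = real (Suc m) * r * bw m r k"
    proof -
      have "bw (Suc m) r (Suc k) * real (Suc k) = (real (Suc m choose Suc k) * real (Suc k)) * (r * (r^k * (1-r)^(m-k)))"
        unfolding bw_def by (simp only: power_Suc diff_Suc_Suc mult_ac)
      also have "\<dots> = real (Suc m) * r * bw m r k" unfolding e bw_def by (simp only: mult_ac)
      finally show ?thesis .
    qed
  qed
  also have "\<dots> = real (Suc m) * r" using BE_one[of m r]
    by (simp add: BE_def sum_distrib_left[symmetric] del: of_nat_Suc)
  finally show ?thesis by (simp add: Suc)
qed

lemma BE_inv:
  assumes "0 < r" "r \<le> 1"
  shows "BE n r (\<lambda>k. 1 / (real k + 1)) \<le> 1 / ((real n + 1) * r)"
proof -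
  have "BE n r (\<lambda>k. 1 / (real k + 1)) = (\<Sum>k\<le>n. bw (Suc n) r (Suc k)) / ((real n + 1) * r)"
  proof -
    have "BE n r (\<lambda>k. 1 / (real k + 1)) = (\<Sum>k\<le>n. bw (Suc n) r (Suc k) / ((real n + 1) * r))"
      unfolding BE_def
    proof (intro sum.cong refl)
      fix k assume "k \<in> {..n}"
      then have "k \<le> n" by simp
      have e: "real (Suc n choose Suc k) * real (Suc k) = real (Suc n) * real (n choose k)"
        using Suc_times_binomial_eq[of n k] by (metis of_nat_mult)
      have e2: "real (n choose k) / (real k + 1) = real (Suc n choose Suc k) / (real n + 1)"
        using e by (simp add: field_simps)
      show "bw n r k * (1 / (real k + 1)) = bw (Suc n) r (Suc k) / ((real n + 1) * r)"
      proof -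
        have "bw n r k * (1 / (real k + 1)) = (real (n choose k) / (real k + 1)) * (r^k * (1-r)^(n-k))"
          by (simp add: bw_def)
        also have "\<dots> = real (Suc n choose Suc k) / (real n + 1) * (r^k * (1-r)^(n-k))"
          by (simp only: e2)
        also have "\<dots> = bw (Suc n) r (Suc k) / ((real n + 1) * r)"
          using assms by (simp add: bw_def)
        finally show ?thesis .
      qed
    qed
    then show ?thesis by (simp add: sum_divide_distrib)
  qed
  also have "\<dots> \<le> 1 / ((real n + 1) * r)"
  proof -
    have "(\<Sum>k\<le>n. bw (Suc n) r (Suc k)) \<le> bw (Suc n) r 0 + (\<Sum>k\<le>n. bw (Suc n) r (Suc k))"
      using assms by (simp add: bw_nonneg)
    also have "\<dots> = 1" using BE_one[of "Suc n" r] unfolding BE_def by (subst (asm) sum.atMost_Suc_shift) simp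
    finally show ?thesis using assms by (intro divide_right_mono) auto
  qed
  finally show ?thesis .
qed

lemma BE_affine: "BE n r (\<lambda>k. a + b * real k) = a + b * (real n * r)"
  by (simp add: BE_add BE_cmult BE_const BE_mean)

lemma BE_ln_upper:
  assumes "0 < r" "r < 1"
  shows "BE n r (\<lambda>k. ln (real k + 1)) \<le> ln (real n * r + 1)"
proof -
  define m where "m = real n * r + 1"
  have m: "m > 0" using assms unfolding m_def by (simp add: add_nonneg_pos)
  have "BE n r (\<lambda>k. ln (real k + 1)) \<le> BE n r (\<lambda>k. (ln m + (1 - m)/m) + (1/m) * real k)"
  proof (rule BE_mono)
    fix k
    have "ln ((real k + 1)/m) \<le> (real k + 1)/m - 1" using m by (intro ln_le_minus_one) auto
    then show "ln (real k + 1) \<le> (ln m + (1 - m)/m) + (1/m) * real k"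
      using m by (simp add: ln_div field_simps)
  qed (use assms in auto)
  also have "\<dots> = ln m" 
  proof -
    have e: "real n * r = m - 1" by (simp add: m_def)
    show ?thesis unfolding BE_affine e using m by (simp add: field_simps)
  qed
  finally show ?thesis by (simp add: m_def)
qed

lemma BE_ln_lower:
  assumes "0 < r" "r < 1"
  shows "BE n r (\<lambda>k. ln (real k + 1)) \<ge> ln (real n * r + 1) - (1 - r) / ((real n + 1) * r)"
proof -
  define m where "m = real n * r + 1"
  have m: "m > 0" using assms unfolding m_def by (simp add: add_nonneg_pos)
  have "BE n r (\<lambda>k. ln (real k + 1)) \<ge> BE n r (\<lambda>k. (ln m + 1) + (- m) * (1 / (real k + 1)))"
  proof (rule BE_mono)
    fix k
    have "ln (m / (real k + 1)) \<le> m / (real k + 1) - 1" using m by (intro ln_le_minus_one) auto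
    then show "(ln m + 1) + (- m) * (1 / (real k + 1)) \<le> ln (real k + 1)"
      using m by (simp add: ln_div field_simps)
  qed (use assms in auto)
  moreover have "BE n r (\<lambda>k. (ln m + 1) + (- m) * (1 / (real k + 1))) \<ge> ln m - (1 - r) / ((real n + 1) * r)"
  proof -
    have "BE n r (\<lambda>k. (ln m + 1) + (- m) * (1 / (real k + 1))) = ln m + 1 - m * BE n r (\<lambda>k. 1 / (real k + 1))"
      unfolding BE_add BE_cmult BE_const by simp
    moreover have "m * BE n r (\<lambda>k. 1 / (real k + 1)) \<le> m * (1 / ((real n + 1) * r))"
      using BE_inv[of r n] assms m by (intro mult_left_mono) auto
    moreover have "ln m + 1 - m * (1 / ((real n + 1) * r)) = ln m - (1 - r) / ((real n + 1) * r)"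
    proof -
      have d: "r + r * real n > 0" using assms by (simp add: add_pos_nonneg)
      show ?thesis using assms d by (simp add: m_def field_simps)
    qed
    ultimately show ?thesis by linarith
  qed
  ultimately show ?thesis by (simp add: m_def)
qed

lemma BE_powr:
  assumes "0 < r" "r < 1" "\<gamma> > 0"
  shows "BE n r (\<lambda>k. (real k + 1) powr (-\<gamma>)) \<ge> (real n * r + 1) powr (-\<gamma>)"
proof -
  define m where "m = real n * r + 1"
  have m: "m > 0" using assms unfolding m_def by (simp add: add_nonneg_pos)
  define c where "c = m powr (-\<gamma>)"
  have "BE n r (\<lambda>k. (real k + 1) powr (-\<gamma>)) \<ge> BE n r (\<lambda>k. c * (1 - \<gamma> * (1/m - 1)) + (- c * \<gamma> / m) * real k)"
  proof (rule BE_mono)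
    fix k
    define x where "x = real k + 1"
    have x: "x > 0" unfolding x_def by simp
    have "(x/m) powr (-\<gamma>) = exp (-\<gamma> * ln (x/m))" using x m by (simp add: powr_def)
    also have "\<dots> \<ge> 1 + (-\<gamma> * ln (x/m))" by (rule exp_ge_add_one_self)
    finally have 1: "(x/m) powr (-\<gamma>) \<ge> 1 - \<gamma> * ln (x/m)" by simp
    have "ln (x/m) \<le> x/m - 1" using x m by (intro ln_le_minus_one) auto
    then have "\<gamma> * ln (x/m) \<le> \<gamma> * (x/m - 1)" using assms by (intro mult_left_mono) auto
    with 1 have 2: "(x/m) powr (-\<gamma>) \<ge> 1 - \<gamma> * (x/m - 1)" by linarith
    have "x powr (-\<gamma>) = c * (x/m) powr (-\<gamma>)" using x m
      by (simp add: c_def powr_divide)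
    also have "\<dots> \<ge> c * (1 - \<gamma> * (x/m - 1))" using 2 by (intro mult_left_mono) (auto simp: c_def)
    finally have "x powr (-\<gamma>) \<ge> c * (1 - \<gamma> * (x/m - 1))" .
    moreover have "c * (1 - \<gamma> * (x/m - 1)) = c * (1 - \<gamma> * (1/m - 1)) + (- c * \<gamma> / m) * real k"
      using m by (simp add: x_def field_simps)
    ultimately show "c * (1 - \<gamma> * (1/m - 1)) + (- c * \<gamma> / m) * real k \<le> (real k + 1) powr (-\<gamma>)"
      by (simp add: x_def)
  qed (use assms in auto)
  also have "BE n r (\<lambda>k. c * (1 - \<gamma> * (1/m - 1)) + (- c * \<gamma> / m) * real k) = c"
  proof -
    have e: "real n * r = m - 1" by (simp add: m_def)
    show ?thesis unfolding BE_affine e using m by (simp add: field_simps)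
  qed
  finally show ?thesis by (simp add: c_def m_def)
qed

lemma BE_top:
  assumes "0 \<le> r" "r \<le> 1" "\<And>k. k < n \<Longrightarrow> f k \<le> 0"
  shows "BE n r f \<le> r^n * f n"
proof -
  have "BE n r f = bw n r n * f n + (\<Sum>k<n. bw n r k * f k)"
    unfolding BE_def by (simp add: lessThan_Suc_atMost[symmetric])
  also have "(\<Sum>k<n. bw n r k * f k) \<le> 0"
    using assms by (intro sum_nonpos mult_nonneg_nonpos) (auto simp: bw_nonneg)
  finally show ?thesis by (simp add: bw_def)
qed


definition Top :: "(nat \<Rightarrow> nat \<Rightarrow> real) \<Rightarrow> (nat \<Rightarrow> nat \<Rightarrow> real) \<Rightarrow> nat \<Rightarrow> nat \<Rightarrow> real" where
  "Top p f i n = p i 0 * BE n (p i 0) (f 0) + p i 1 * BE n (p i 0) (\<lambda>k. f 1 (n - k))"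

lemma Top_lin: "Top p (\<lambda>i n. f i n + x * g i n) i n = Top p f i n + x * Top p g i n"
  unfolding Top_def BE_add BE_cmult by (simp add: algebra_simps)

lemma Top_neg: "Top p (\<lambda>i n. - f i n) i n = - Top p f i n"
  using Top_lin[of p "\<lambda>i n. 0" "-1" f i n] unfolding Top_def by (simp add: BE_const)

lemma Top_const_diff: "p i 0 + p i 1 = 1 \<Longrightarrow> Top p (\<lambda>i n. f i n - x) i n = Top p f i n - x"
proof -
  assume h: "p i 0 + p i 1 = 1"
  have "x * p i 0 + x * p i 1 = x" using h by (metis distrib_left mult_1_right)
  then show ?thesis unfolding Top_def BE_diff BE_const by (simp add: algebra_simps)
qed

lemma maxp:
  assumes pr: "\<And>i. i \<in> {0,1} \<Longrightarrow> 0 < p i 0 \<and> p i 0 < 1 \<and> p i 1 = 1 - p i 0"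
    and N: "N \<ge> 1"
    and sub: "\<And>i n. i \<in> {0,1} \<Longrightarrow> n \<ge> N \<Longrightarrow> Z i n \<le> Top p Z i n"
    and init: "\<And>i m. i \<in> {0,1} \<Longrightarrow> m < N \<Longrightarrow> Z i m \<le> 0"
  shows "\<forall>i\<in>{0,1}. Z i n \<le> 0"
proof (induction n rule: less_induct)
  case (less n)
  show ?case
  proof (cases "n < N")
    case True then show ?thesis using init by auto
  next
    case False
    then have nN: "n \<ge> N" by simp
    define X where "X = max (Z 0 n) (Z 1 n)"
    have key: "Z i n \<le> (p i 0 ^ Suc n + p i 1 ^ Suc n) * X \<and> p i 0 ^ Suc n + p i 1 ^ Suc n < 1"
      if i: "i \<in> {0,1}" for i
    proof -
      have p0: "0 < p i 0" "p i 0 < 1" and p1: "p i 1 = 1 - p i 0" using pr[OF i] by auto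
      have a: "BE n (p i 0) (Z 0) \<le> p i 0 ^ n * Z 0 n"
        using less.IH p0 by (intro BE_top) auto
      have "BE n (p i 0) (\<lambda>k. Z 1 (n - k)) = BE n (1 - p i 0) (Z 1)" by (rule BE_rev)
      also have "\<dots> \<le> p i 1 ^ n * Z 1 n"
        unfolding p1 using less.IH p0 by (intro BE_top) auto
      finally have b: "BE n (p i 0) (\<lambda>k. Z 1 (n - k)) \<le> p i 1 ^ n * Z 1 n" .
      have "Z i n \<le> p i 0 * (p i 0 ^ n * Z 0 n) + p i 1 * (p i 1 ^ n * Z 1 n)"
        using sub[OF i nN] a b p0 p1 unfolding Top_def
        by (smt (verit) mult_left_mono)
      also have "\<dots> \<le> p i 0 * (p i 0 ^ n * X) + p i 1 * (p i 1 ^ n * X)"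
        using p0 p1 unfolding X_def
        by (intro add_mono mult_left_mono) auto
      finally have c1: "Z i n \<le> (p i 0 ^ Suc n + p i 1 ^ Suc n) * X" by (simp add: algebra_simps)
      have "p i 0 ^ Suc n \<le> p i 0 ^ 2" using p0 N nN by (intro power_decreasing) auto
      moreover have "p i 1 ^ Suc n \<le> p i 1 ^ 2" using p0 p1 N nN by (intro power_decreasing) auto
      moreover have "p i 0 ^ 2 < p i 0" using p0 by (simp add: power2_eq_square)
      moreover have "p i 1 ^ 2 < p i 1" using p0 p1 by (simp add: power2_eq_square)
      ultimately have "p i 0 ^ Suc n + p i 1 ^ Suc n < 1" using p1 by linarith
      with c1 show ?thesis by blast
    qed
    have "X \<le> 0"
    proof (rule ccontr)
      assume "\<not> X \<le> 0"
      then have Xp: "X > 0" by simp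
      have "X = Z 0 n \<or> X = Z 1 n" unfolding X_def by auto
      then obtain i where i: "i \<in> {0,1}" "X = Z i n" by auto
      from key[OF i(1)] i(2) Xp have "X < X"
        by (smt (verit) mult_less_cancel_right2)
      then show False by simp
    qed
    then show ?thesis unfolding X_def by auto
  qed
qed

lemma Phi_bound:
  assumes "0 < r" "r < 1"
  shows "\<bar>ln (real n + 1) - r * BE n r (\<lambda>k. ln (real k + 1)) - (1 - r) * BE n (1 - r) (\<lambda>k. ln (real k + 1))
          - (- (r * ln r + (1 - r) * ln (1 - r)))\<bar> \<le> 1 / (real n + 1)"
proof -
  define s where "s = 1 - r"
  have s: "0 < s" "s < 1" "r + s = 1" using assms by (auto simp: s_def)
  have np: "real n + 1 > 0" by simp
  define E1 where "E1 = BE n r (\<lambda>k. ln (real k + 1))"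
  define E2 where "E2 = BE n s (\<lambda>k. ln (real k + 1))"
  have E1: "ln (real n * r + 1) - s / ((real n + 1) * r) \<le> E1" "E1 \<le> ln (real n * r + 1)"
    using BE_ln_lower[of r n] BE_ln_upper[of r n] assms by (auto simp: E1_def s_def)
  have E2: "ln (real n * s + 1) - r / ((real n + 1) * s) \<le> E2" "E2 \<le> ln (real n * s + 1)"
    using BE_ln_lower[of s n] BE_ln_upper[of s n] s by (auto simp: E2_def s_def)
  have eps: "\<exists>e. ln (real n * u + 1) = ln (real n + 1) + ln u + e \<and> 0 \<le> e \<and> e \<le> v / ((real n + 1) * u)"
    if u: "0 < u" "u + v = 1" "0 \<le> v" for u v
  proof -
    define e where "e = ln ((real n * u + 1) / ((real n + 1) * u))"
    have pos: "real n * u + 1 > 0" using u by (simp add: add_nonneg_pos)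
    have d: "(real n + 1) * u > 0" using u by simp
    have q: "(real n * u + 1) / ((real n + 1) * u) = 1 + v / ((real n + 1) * u)"
      using d u by (simp add: field_simps)
    have "ln (real n * u + 1) = ln ((real n + 1) * u) + e"
      using pos d by (simp add: e_def ln_div)
    also have "ln ((real n + 1) * u) = ln (real n + 1) + ln u" using u by (simp add: ln_mult)
    finally have 1: "ln (real n * u + 1) = ln (real n + 1) + ln u + e" .
    have "v / ((real n + 1) * u) \<ge> 0" using d u by simp
    then have 2: "0 \<le> e" unfolding e_def q by simp
    have "e \<le> (1 + v / ((real n + 1) * u)) - 1" unfolding e_def q using d u
      by (intro ln_le_minus_one) (auto intro: add_pos_nonneg)
    then show ?thesis using 1 2 by auto
  qed
  obtain e1 where e1: "ln (real n * r + 1) = ln (real n + 1) + ln r + e1" "0 \<le> e1" "e1 \<le> s / ((real n + 1) * r)"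
    using eps[of r s] s assms by auto
  obtain e2 where e2: "ln (real n * s + 1) = ln (real n + 1) + ln s + e2" "0 \<le> e2" "e2 \<le> r / ((real n + 1) * s)"
    using eps[of s r] s assms by (auto simp: add.commute)
  have k1: "r * (s / ((real n + 1) * r)) = s / (real n + 1)" using assms by simp
  have k2: "s * (r / ((real n + 1) * s)) = r / (real n + 1)" using s by simp
  define d1 where "d1 = E1 - ln (real n * r + 1)"
  define d2 where "d2 = E2 - ln (real n * s + 1)"
  have b1: "\<bar>r * (e1 + d1)\<bar> \<le> s / (real n + 1)"
  proof -
    have "\<bar>e1 + d1\<bar> \<le> s / ((real n + 1) * r)" using e1 E1 unfolding d1_def by auto
    then have "r * \<bar>e1 + d1\<bar> \<le> r * (s / ((real n + 1) * r))" using assms by (intro mult_left_mono) auto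
    then show ?thesis using assms k1 by (simp add: abs_mult)
  qed
  have b2: "\<bar>s * (e2 + d2)\<bar> \<le> r / (real n + 1)"
  proof -
    have "\<bar>e2 + d2\<bar> \<le> r / ((real n + 1) * s)" using e2 E2 unfolding d2_def by auto
    then have "s * \<bar>e2 + d2\<bar> \<le> s * (r / ((real n + 1) * s))" using s by (intro mult_left_mono) auto
    then show ?thesis using s k2 by (simp add: abs_mult)
  qed
  have eq: "ln (real n + 1) - r * E1 - s * E2 - (- (r * ln r + s * ln s)) = - (r * (e1 + d1)) - s * (e2 + d2)"
  proof -
    have "E1 = ln (real n + 1) + ln r + e1 + d1" using e1 unfolding d1_def by simp
    moreover have "E2 = ln (real n + 1) + ln s + e2 + d2" using e2 unfolding d2_def by simp
    ultimately show ?thesis unfolding s_def by (simp add: algebra_simps)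
  qed
  have "r / (real n + 1) + s / (real n + 1) = 1 / (real n + 1)" using s(3) by (simp add: add_divide_distrib[symmetric])
  then show ?thesis using eq b1 b2 unfolding E1_def E2_def s_def[symmetric] by linarith
qed


lemma G_asym:
  assumes r: "0 < r" "r < 1" and g: "\<gamma> > 0"
  shows "\<exists>\<delta>>0. eventually (\<lambda>n. (real n + 1) powr (-\<gamma>) - r * (real n * r + 1) powr (-\<gamma>)
            - (1 - r) * (real n * (1 - r) + 1) powr (-\<gamma>) \<le> - \<delta> * real n powr (-\<gamma>)) sequentially"
proof -
  define s where "s = 1 - r"
  have s: "0 < s" "s < 1" using r by (auto simp: s_def)
  define L where "L = 1 - r * r powr (-\<gamma>) - s * s powr (-\<gamma>)"
  have "1 < r powr (-\<gamma>)" using powr_less_mono2_neg[of "-\<gamma>" r 1] r g by simp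
  then have "r < r * r powr (-\<gamma>)" using r by (metis mult.right_neutral mult_strict_left_mono)
  moreover have "1 < s powr (-\<gamma>)" using powr_less_mono2_neg[of "-\<gamma>" s 1] s g by simp
  then have "s < s * s powr (-\<gamma>)" using s by (metis mult.right_neutral mult_strict_left_mono)
  ultimately have L: "L < 0" unfolding L_def s_def by simp
  define f where "f = (\<lambda>n::nat. (1 + 1 / real n) powr (-\<gamma>) - r * (r + 1 / real n) powr (-\<gamma>) - s * (s + 1 / real n) powr (-\<gamma>))"
  have "(f \<longlongrightarrow> (1 + 0) powr (-\<gamma>) - r * (r + 0) powr (-\<gamma>) - s * (s + 0) powr (-\<gamma>)) sequentially"
    unfolding f_def using r s by (intro tendsto_intros) auto
  then have "(f \<longlongrightarrow> L) sequentially" by (simp add: L_def)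
  then have ev: "eventually (\<lambda>n. f n < L / 2) sequentially" using L by (intro order_tendstoD(2)) auto
  have "eventually (\<lambda>n. (real n + 1) powr (-\<gamma>) - r * (real n * r + 1) powr (-\<gamma>)
            - (1 - r) * (real n * (1 - r) + 1) powr (-\<gamma>) \<le> - (- L / 2) * real n powr (-\<gamma>)) sequentially"
    using ev eventually_ge_at_top[of 1]
  proof eventually_elim
    case (elim n)
    have n: "real n > 0" using elim by simp
    have e1: "(real n + 1) powr (-\<gamma>) = (1 + 1 / real n) powr (-\<gamma>) * real n powr (-\<gamma>)"
    proof -
      have "real n + 1 = (1 + 1 / real n) * real n" using n by (simp add: field_simps)
      then show ?thesis by (metis powr_mult)
    qed
    have e2: "(real n * u + 1) powr (-\<gamma>) = (u + 1 / real n) powr (-\<gamma>) * real n powr (-\<gamma>)" for u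
    proof -
      have "real n * u + 1 = (u + 1 / real n) * real n" using n by (simp add: field_simps)
      then show ?thesis by (metis powr_mult)
    qed
    have "(real n + 1) powr (-\<gamma>) - r * (real n * r + 1) powr (-\<gamma>) - (1 - r) * (real n * (1 - r) + 1) powr (-\<gamma>)
          = f n * real n powr (-\<gamma>)"
      unfolding e1 e2 f_def s_def by (simp add: algebra_simps)
    also have "\<dots> \<le> (L / 2) * real n powr (-\<gamma>)"
      using elim by (intro mult_right_mono) auto
    finally show ?case by simp
  qed
  moreover have "- L / 2 > 0" using L by simp
  ultimately show ?thesis by blast
qed

lemma bdd_above_lemma:
  assumes pr: "\<And>i. i \<in> {0,1} \<Longrightarrow> 0 < p i 0 \<and> p i 0 < 1 \<and> p i 1 = 1 - p i 0"
    and N: "N \<ge> 1" and d: "\<delta> > 0" and M: "M \<ge> 0"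
    and hY: "\<And>i n. i \<in> {0,1} \<Longrightarrow> n \<ge> N \<Longrightarrow> Y i n - Top p Y i n \<le> M * real n powr (-\<gamma>)"
    and hG: "\<And>i n. i \<in> {0,1} \<Longrightarrow> n \<ge> N \<Longrightarrow>
       (real n + 1) powr (-\<gamma>) - Top p (\<lambda>i n. (real n + 1) powr (-\<gamma>)) i n \<le> - \<delta> * real n powr (-\<gamma>)"
  shows "\<exists>S. \<forall>i\<in>{0,1}. \<forall>n. Y i n \<le> S"
proof -
  define lam where "lam = M / \<delta>"
  have lam: "lam \<ge> 0" "lam * \<delta> = M" using d M by (auto simp: lam_def)
  define G where "G = (\<lambda>i::nat. \<lambda>n::nat. (real n + 1) powr (-\<gamma>))"
  define B where "B = (\<lambda>i n. Y i n + lam * G i n)"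
  define S where "S = (\<Sum>m<N. \<bar>B 0 m\<bar> + \<bar>B 1 m\<bar>)"
  define Z where "Z = (\<lambda>i n. B i n - S)"
  have "\<forall>i\<in>{0,1}. Z i n \<le> 0" for n
  proof (rule maxp[OF pr N])
    fix i n :: nat assume i: "i \<in> {0,1}" and n: "n \<ge> N"
    have s1: "p i 0 + p i 1 = 1" using pr[OF i] by simp
    have "Top p Z i n = Top p B i n - S" unfolding Z_def using Top_const_diff[of p i B S n] s1 by simp
    moreover have "Top p B i n = Top p Y i n + lam * Top p G i n" unfolding B_def by (rule Top_lin)
    moreover have "lam * (G i n - Top p G i n) \<le> lam * (- \<delta> * real n powr (-\<gamma>))"
      using hG[OF i n] lam by (intro mult_left_mono) (auto simp: G_def)
    moreover have "lam * (- \<delta> * real n powr (-\<gamma>)) = - M * real n powr (-\<gamma>)"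
      using lam by (metis minus_mult_commute mult.assoc)
    moreover have "lam * (G i n - Top p G i n) = lam * G i n - lam * Top p G i n" by (simp add: algebra_simps)
    moreover have "Z i n = Y i n + lam * G i n - S" by (simp add: Z_def B_def)
    ultimately show "Z i n \<le> Top p Z i n" using hY[OF i n] by linarith
  next
    fix i m :: nat assume i: "i \<in> {0,1}" and m: "m < N"
    have "\<bar>B i m\<bar> \<le> \<bar>B 0 m\<bar> + \<bar>B 1 m\<bar>" using i by auto
    also have "\<dots> \<le> S" unfolding S_def using m
      by (intro member_le_sum[where f="\<lambda>m. \<bar>B 0 m\<bar> + \<bar>B 1 m\<bar>"]) auto
    finally show "Z i m \<le> 0" unfolding Z_def by simp
  qed
  then have "Y i n \<le> S" if "i \<in> {0,1}" for i n :: nat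
    using that lam unfolding Z_def B_def G_def
    by (smt (verit) mult_nonneg_nonneg powr_ge_zero)
  then show ?thesis by blast
qed


theorem lemma4p4:
  fixes p :: "nat \<Rightarrow> nat \<Rightarrow> real"
    and a eps :: "nat \<Rightarrow> nat \<Rightarrow> real"
    and c :: "nat \<Rightarrow> real"
    and \<alpha> :: real
  assumes p_range: "\<And>i j. i \<in> {0,1} \<Longrightarrow> j \<in> {0,1} \<Longrightarrow> 0 < p i j \<and> p i j < 1"
    and p_stoch: "\<And>i. i \<in> {0,1} \<Longrightarrow> p i 0 + p i 1 = 1"
    and p_not_half: "\<exists>i\<in>{0,1}. \<exists>j\<in>{0,1}. p i j \<noteq> 1/2"
    and rec: "\<And>i n. i \<in> {0,1} \<Longrightarrow> n \<ge> 1 \<Longrightarrow>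
       a i n = p i 0 * measure_pmf.expectation (binomial_pmf n (p i 0)) (\<lambda>k. a 0 k)
             + p i 1 * measure_pmf.expectation (binomial_pmf n (p i 0)) (\<lambda>k. a 1 (n - k))
             + eps i n"
    and alpha_pos: "\<alpha> > 0"
    and eps_asymp: "\<And>i. i \<in> {0,1} \<Longrightarrow>
       (\<lambda>n. eps i n - c i) \<in> O(\<lambda>n. real n powr (-\<alpha>))"
  shows "\<forall>i\<in>{0,1}. (\<lambda>n. a i n
            - (stat_pi p 0 * c 0 + stat_pi p 1 * c 1) / entropy_rate p * ln (real n))
          \<in> O(\<lambda>_. 1)"
proof -
  have pr: "0 < p i 0 \<and> p i 0 < 1 \<and> p i 1 = 1 - p i 0" if i: "i \<in> {0,1}" for i
    using p_range[OF i, of 0] p_stoch[OF i] by auto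
  have p01: "0 < p 0 1" "0 < p 1 0" using p_range[of 0 1] p_range[of 1 0] by auto
  have Hdef: "row_entropy p i = - (p i 0 * ln (p i 0) + p i 1 * ln (p i 1))" for i
    by (simp add: row_entropy_def)
  have Hpos: "row_entropy p i > 0" if i: "i \<in> {0,1}" for i
  proof -
    have "p i 0 * ln (p i 0) < 0" using p_range[OF i, of 0] by (intro mult_pos_neg) auto
    moreover have "p i 1 * ln (p i 1) < 0" using p_range[OF i, of 1] by (intro mult_pos_neg) auto
    ultimately show ?thesis unfolding Hdef by simp
  qed
  define H0 where "H0 = row_entropy p 0"
  define H1 where "H1 = row_entropy p 1"
  have H0: "H0 > 0" and H1: "H1 > 0" using Hpos[of 0] Hpos[of 1] by (auto simp: H0_def H1_def)
  define K where "K = (stat_pi p 0 * c 0 + stat_pi p 1 * c 1) / entropy_rate p"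
  have KH: "K * (p 1 0 * H0 + p 0 1 * H1) = p 1 0 * c 0 + p 0 1 * c 1"
  proof -
    have s: "p 0 1 + p 1 0 > 0" using p01 by simp
    have d: "p 1 0 * H0 + p 0 1 * H1 > 0" using p01 H0 H1 by (intro add_pos_pos mult_pos_pos)
    have "entropy_rate p = (p 1 0 * H0 + p 0 1 * H1) / (p 0 1 + p 1 0)"
      unfolding entropy_rate_def stat_pi_def H0_def H1_def by (simp add: add_divide_distrib)
    moreover have "stat_pi p 0 * c 0 + stat_pi p 1 * c 1 = (p 1 0 * c 0 + p 0 1 * c 1) / (p 0 1 + p 1 0)"
      unfolding stat_pi_def by (simp add: add_divide_distrib)
    ultimately have "K = (p 1 0 * c 0 + p 0 1 * c 1) / (p 1 0 * H0 + p 0 1 * H1)"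
      unfolding K_def using s d by simp
    then show ?thesis using d by simp
  qed
  define b0 where "b0 = (c 0 - K * H0) / p 0 1"
  define \<beta> where "\<beta> = (\<lambda>i::nat. if i = 0 then b0 else 0)"
  have Cbeta: "K * row_entropy p i + \<beta> i - p i 0 * \<beta> 0 - p i 1 * \<beta> 1 = c i" if i: "i \<in> {0,1}" for i
  proof (cases "i = 0")
    case True
    have e: "p 0 0 = 1 - p 0 1" using p_stoch[of 0] by simp
    have e1: "p 0 1 * b0 = c 0 - K * H0" using p01 by (simp add: b0_def)
    have e2: "b0 - p 0 0 * b0 = p 0 1 * b0" unfolding e by (simp add: algebra_simps)
    show ?thesis using True e1 e2 by (simp add: \<beta>_def H0_def)
  next
    case False
    then have i1: "i = 1" using i by auto
    have "K * H1 - p 1 0 * b0 = c 1"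
    proof -
      have "p 0 1 * (K * H1 - p 1 0 * b0) = K * (p 1 0 * H0 + p 0 1 * H1) - p 1 0 * c 0"
        using p01 by (simp add: b0_def field_simps)
      also have "\<dots> = p 0 1 * c 1" using KH by simp
      finally show ?thesis using p01 by simp
    qed
    then show ?thesis using i1 by (simp add: \<beta>_def H1_def)
  qed
  define lnf where "lnf = (\<lambda>k::nat. ln (real k + 1))"
  define \<Phi> where "\<Phi> = (\<lambda>i n. ln (real n + 1) - p i 0 * BE n (p i 0) lnf - (1 - p i 0) * BE n (1 - p i 0) lnf)"
  define F where "F = (\<lambda>i n. K * ln (real n + 1) + \<beta> i)"
  have FT: "F i n - Top p F i n = c i + K * (\<Phi> i n - row_entropy p i)" if i: "i \<in> {0,1}" for i n
  proof -
    have 1: "BE n (p i 0) (\<lambda>k. K * ln (real k + 1) + \<beta> 0) = K * BE n (p i 0) lnf + \<beta> 0"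
      unfolding lnf_def by (simp only: BE_add BE_cmult BE_const)
    have "BE n (p i 0) (\<lambda>k. K * ln (real (n - k) + 1) + \<beta> 1) = K * BE n (p i 0) (\<lambda>k. lnf (n - k)) + \<beta> 1"
      unfolding lnf_def by (simp only: BE_add BE_cmult BE_const)
    also have "BE n (p i 0) (\<lambda>k. lnf (n - k)) = BE n (1 - p i 0) lnf" by (rule BE_rev)
    finally have 2: "BE n (p i 0) (\<lambda>k. K * ln (real (n - k) + 1) + \<beta> 1) = K * BE n (1 - p i 0) lnf + \<beta> 1" .
    have p1: "p i 1 = 1 - p i 0" using pr[OF i] by simp
    have "Top p F i n = p i 0 * (K * BE n (p i 0) lnf + \<beta> 0) + (1 - p i 0) * (K * BE n (1 - p i 0) lnf + \<beta> 1)"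
      unfolding Top_def F_def 1 2 p1 by simp
    then have "F i n - Top p F i n = K * \<Phi> i n + \<beta> i - p i 0 * \<beta> 0 - (1 - p i 0) * \<beta> 1"
      unfolding F_def \<Phi>_def by (simp add: algebra_simps)
    moreover have "K * row_entropy p i + \<beta> i - p i 0 * \<beta> 0 - (1 - p i 0) * \<beta> 1 = c i"
      using Cbeta[OF i] unfolding p1 .
    ultimately show ?thesis by (simp add: algebra_simps)
  qed
  have Phib: "\<bar>\<Phi> i n - row_entropy p i\<bar> \<le> 1 / (real n + 1)" if i: "i \<in> {0,1}" for i n
  proof -
    have "row_entropy p i = - (p i 0 * ln (p i 0) + (1 - p i 0) * ln (1 - p i 0))"
      using pr[OF i] by (simp add: Hdef)
    then show ?thesis using Phi_bound[of "p i 0" n] pr[OF i] unfolding \<Phi>_def lnf_def by simp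
  qed
  have arec: "a i n = Top p a i n + eps i n" if i: "i \<in> {0,1}" and n: "n \<ge> 1" for i n
    using rec[OF i n] pr[OF i] unfolding Top_def by (simp add: BE_expect)
  define D where "D = (\<lambda>i n. a i n + (-1) * F i n)"
  have De: "D i n - Top p D i n = eps i n - c i - K * (\<Phi> i n - row_entropy p i)"
    if i: "i \<in> {0,1}" and n: "n \<ge> 1" for i n
  proof -
    have "Top p D i n = Top p a i n + (-1) * Top p F i n" unfolding D_def by (rule Top_lin)
    then show ?thesis using arec[OF i n] FT[OF i, of n] unfolding D_def by simp
  qed
  have ebd: "\<exists>C>0. \<exists>N. \<forall>n\<ge>N. \<bar>eps i n - c i\<bar> \<le> C * real n powr (-\<alpha>)" if i: "i \<in> {0,1}" for i
  proof -
    obtain C where C: "C > 0" "eventually (\<lambda>n. norm (eps i n - c i) \<le> C * norm (real n powr (-\<alpha>))) at_top"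
      using eps_asymp[OF i] by (elim landau_o.bigE) auto
    then obtain N where "\<forall>n\<ge>N. norm (eps i n - c i) \<le> C * norm (real n powr (-\<alpha>))"
      by (auto simp: eventually_at_top_linorder)
    then show ?thesis using C(1) by auto
  qed
  obtain C0 N0 where C0: "C0 > 0" "\<forall>n\<ge>N0. \<bar>eps 0 n - c 0\<bar> \<le> C0 * real n powr (-\<alpha>)" using ebd[of 0] by auto
  obtain C1 N1 where C1: "C1 > 0" "\<forall>n\<ge>N1. \<bar>eps 1 n - c 1\<bar> \<le> C1 * real n powr (-\<alpha>)" using ebd[of 1] by auto
  define Ce where "Ce = max C0 C1"
  have Ce: "\<bar>eps i n - c i\<bar> \<le> Ce * real n powr (-\<alpha>)" if i: "i \<in> {0,1}" and n: "n \<ge> max N0 N1" for i n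
  proof -
    have "C0 * real n powr (-\<alpha>) \<le> Ce * real n powr (-\<alpha>)" "C1 * real n powr (-\<alpha>) \<le> Ce * real n powr (-\<alpha>)"
      by (auto simp: Ce_def intro!: mult_right_mono)
    then show ?thesis using C0 C1 i n by fastforce
  qed
  define \<gamma> where "\<gamma> = min \<alpha> 1"
  have g: "\<gamma> > 0" "\<gamma> \<le> \<alpha>" "\<gamma> \<le> 1" using alpha_pos by (auto simp: \<gamma>_def)
  obtain d0 where d0: "d0 > 0" "eventually (\<lambda>n. (real n + 1) powr (-\<gamma>) - p 0 0 * (real n * p 0 0 + 1) powr (-\<gamma>)
            - (1 - p 0 0) * (real n * (1 - p 0 0) + 1) powr (-\<gamma>) \<le> - d0 * real n powr (-\<gamma>)) sequentially"
    using G_asym[of "p 0 0" \<gamma>] pr[of 0] g by auto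
  obtain d1 where d1: "d1 > 0" "eventually (\<lambda>n. (real n + 1) powr (-\<gamma>) - p 1 0 * (real n * p 1 0 + 1) powr (-\<gamma>)
            - (1 - p 1 0) * (real n * (1 - p 1 0) + 1) powr (-\<gamma>) \<le> - d1 * real n powr (-\<gamma>)) sequentially"
    using G_asym[of "p 1 0" \<gamma>] pr[of 1] g by auto
  obtain Ng0 where Ng0: "\<forall>n\<ge>Ng0. (real n + 1) powr (-\<gamma>) - p 0 0 * (real n * p 0 0 + 1) powr (-\<gamma>)
            - (1 - p 0 0) * (real n * (1 - p 0 0) + 1) powr (-\<gamma>) \<le> - d0 * real n powr (-\<gamma>)"
    using d0(2) by (auto simp: eventually_at_top_linorder)
  obtain Ng1 where Ng1: "\<forall>n\<ge>Ng1. (real n + 1) powr (-\<gamma>) - p 1 0 * (real n * p 1 0 + 1) powr (-\<gamma>)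
            - (1 - p 1 0) * (real n * (1 - p 1 0) + 1) powr (-\<gamma>) \<le> - d1 * real n powr (-\<gamma>)"
    using d1(2) by (auto simp: eventually_at_top_linorder)
  define \<delta> where "\<delta> = min d0 d1"
  have \<delta>: "\<delta> > 0" using d0 d1 by (simp add: \<delta>_def)
  define N where "N = max 1 (max (max N0 N1) (max Ng0 Ng1))"
  have N1': "N \<ge> 1" by (simp add: N_def)
  define M where "M = Ce + \<bar>K\<bar>"
  have M: "M \<ge> 0" using C0 C1 by (simp add: M_def Ce_def)
  have ebound: "\<bar>D i n - Top p D i n\<bar> \<le> M * real n powr (-\<gamma>)" if i: "i \<in> {0,1}" and n: "n \<ge> N" for i n
  proof -
    have n1: "n \<ge> 1" "n \<ge> max N0 N1" using n by (auto simp: N_def)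
    have rn: "real n \<ge> 1" using n1 by simp
    have pa: "real n powr (-\<alpha>) \<le> real n powr (-\<gamma>)" using rn g by (intro powr_mono) auto
    have "1 / (real n + 1) \<le> 1 / real n" using rn by (intro divide_left_mono) auto
    also have "\<dots> = real n powr (-1)" using rn by (simp add: powr_neg_one)
    also have "\<dots> \<le> real n powr (-\<gamma>)" using rn g by (intro powr_mono) auto
    finally have pb: "1 / (real n + 1) \<le> real n powr (-\<gamma>)" .
    have "\<bar>K * (\<Phi> i n - row_entropy p i)\<bar> \<le> \<bar>K\<bar> * (1 / (real n + 1))"
      unfolding abs_mult using Phib[OF i, of n] by (intro mult_left_mono) auto
    also have "\<dots> \<le> \<bar>K\<bar> * real n powr (-\<gamma>)" using pb by (intro mult_left_mono) auto
    finally have t1: "\<bar>K * (\<Phi> i n - row_entropy p i)\<bar> \<le> \<bar>K\<bar> * real n powr (-\<gamma>)" .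
    have "\<bar>eps i n - c i\<bar> \<le> Ce * real n powr (-\<alpha>)" using Ce[OF i n1(2)] .
    also have "\<dots> \<le> Ce * real n powr (-\<gamma>)" using pa C0 by (intro mult_left_mono) (auto simp: Ce_def)
    finally have t2: "\<bar>eps i n - c i\<bar> \<le> Ce * real n powr (-\<gamma>)" .
    show ?thesis unfolding De[OF i n1(1)] M_def using t1 t2 by (simp add: algebra_simps abs_triangle_ineq4) linarith?
  qed
  have hG: "(real n + 1) powr (-\<gamma>) - Top p (\<lambda>i n. (real n + 1) powr (-\<gamma>)) i n \<le> - \<delta> * real n powr (-\<gamma>)"
    if i: "i \<in> {0,1}" and n: "n \<ge> N" for i n
  proof -
    have pi: "0 < p i 0" "p i 0 < 1" "p i 1 = 1 - p i 0" using pr[OF i] by auto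
    have b1: "BE n (p i 0) (\<lambda>k. (real k + 1) powr (-\<gamma>)) \<ge> (real n * p i 0 + 1) powr (-\<gamma>)"
      using BE_powr[of "p i 0" \<gamma> n] pi g by simp
    have "BE n (p i 0) (\<lambda>k. (real (n - k) + 1) powr (-\<gamma>)) = BE n (1 - p i 0) (\<lambda>k. (real k + 1) powr (-\<gamma>))"
      by (rule BE_rev[of n "p i 0" "\<lambda>k. (real k + 1) powr (-\<gamma>)"])
    also have "\<dots> \<ge> (real n * (1 - p i 0) + 1) powr (-\<gamma>)"
      using BE_powr[of "1 - p i 0" \<gamma> n] pi g by simp
    finally have b2: "BE n (p i 0) (\<lambda>k. (real (n - k) + 1) powr (-\<gamma>)) \<ge> (real n * (1 - p i 0) + 1) powr (-\<gamma>)" .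
    have T: "Top p (\<lambda>i n. (real n + 1) powr (-\<gamma>)) i n \<ge>
        p i 0 * (real n * p i 0 + 1) powr (-\<gamma>) + (1 - p i 0) * (real n * (1 - p i 0) + 1) powr (-\<gamma>)"
      unfolding Top_def pi(3) using b1 b2 pi
      by (intro add_mono mult_left_mono) auto
    have nn: "real n powr (-\<gamma>) \<ge> 0" by simp
    have "(real n + 1) powr (-\<gamma>) - p i 0 * (real n * p i 0 + 1) powr (-\<gamma>)
            - (1 - p i 0) * (real n * (1 - p i 0) + 1) powr (-\<gamma>) \<le> - \<delta> * real n powr (-\<gamma>)"
    proof (cases "i = 0")
      case True
      have "- d0 * real n powr (-\<gamma>) \<le> - \<delta> * real n powr (-\<gamma>)" using nn by (intro mult_right_mono) (auto simp: \<delta>_def)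
      moreover have "Ng0 \<le> n" using n by (simp add: N_def)
      then have "(real n + 1) powr (-\<gamma>) - p 0 0 * (real n * p 0 0 + 1) powr (-\<gamma>)
            - (1 - p 0 0) * (real n * (1 - p 0 0) + 1) powr (-\<gamma>) \<le> - d0 * real n powr (-\<gamma>)"
        using Ng0 by blast
      ultimately show ?thesis unfolding True by linarith
    next
      case False
      then have "i = 1" using i by auto
      moreover have "- d1 * real n powr (-\<gamma>) \<le> - \<delta> * real n powr (-\<gamma>)" using nn by (intro mult_right_mono) (auto simp: \<delta>_def)
      moreover have "Ng1 \<le> n" using n by (simp add: N_def)
      then have "(real n + 1) powr (-\<gamma>) - p 1 0 * (real n * p 1 0 + 1) powr (-\<gamma>)
            - (1 - p 1 0) * (real n * (1 - p 1 0) + 1) powr (-\<gamma>) \<le> - d1 * real n powr (-\<gamma>)"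
        using Ng1 by blast
      ultimately show ?thesis by (simp add: \<open>i = 1\<close>)
    qed
    then show ?thesis using T by linarith
  qed
  have hY1: "D i n - Top p D i n \<le> M * real n powr (-\<gamma>)" if i: "i \<in> {0,1}" and n: "n \<ge> N" for i n
    by (rule abs_le_D1[OF ebound[OF i n]])
  obtain S1 where S1: "\<forall>i\<in>{0,1}. \<forall>n. D i n \<le> S1"
    using bdd_above_lemma[OF pr N1' \<delta> M hY1 hG] by blast
  have ebound2: "(\<lambda>i n. - D i n) i n - Top p (\<lambda>i n. - D i n) i n \<le> M * real n powr (-\<gamma>)"
    if i: "i \<in> {0,1}" and n: "n \<ge> N" for i n
    using ebound[OF i n] unfolding Top_neg by simp
  obtain S2 where S2: "\<forall>i\<in>{0,1}. \<forall>n. - D i n \<le> S2"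
    using bdd_above_lemma[OF pr N1' \<delta> M ebound2 hG] by blast
  show ?thesis
  proof
    fix i :: nat assume i: "i \<in> {0,1}"
    define Bd where "Bd = \<bar>S1\<bar> + \<bar>S2\<bar> + \<bar>K\<bar> + \<bar>\<beta> i\<bar> + 1"
    have "eventually (\<lambda>n. norm (a i n - K * ln (real n)) \<le> Bd * norm (1::real)) at_top"
      using eventually_ge_at_top[of 1]
    proof eventually_elim
      case (elim n)
      have rn: "real n \<ge> 1" using elim by simp
      have l1: "ln (real n + 1) - ln (real n) \<ge> 0" using rn by simp
      have "ln (real n + 1) - ln (real n) = ln ((real n + 1) / real n)" using rn by (simp add: ln_div)
      also have "\<dots> \<le> (real n + 1) / real n - 1" using rn by (intro ln_le_minus_one) auto
      also have "\<dots> = 1 / real n" using rn by (simp add: field_simps)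
      also have "\<dots> \<le> 1" using rn by simp
      finally have l2: "ln (real n + 1) - ln (real n) \<le> 1" .
      have kl: "\<bar>K * (ln (real n + 1) - ln (real n))\<bar> \<le> \<bar>K\<bar>"
        using l1 l2 by (simp add: abs_mult mult_left_le)
      have "a i n - K * ln (real n) = D i n + K * (ln (real n + 1) - ln (real n)) + \<beta> i"
        unfolding D_def F_def by (simp add: algebra_simps)
      moreover have "D i n \<le> S1" "- D i n \<le> S2" using S1 S2 i by auto
      ultimately show ?case using kl unfolding Bd_def by (simp add: abs_le_iff) linarith?
    qed
    then have "(\<lambda>n. a i n - K * ln (real n)) \<in> O(\<lambda>_. 1)"
      by (intro landau_o.bigI[of Bd]) (auto simp: Bd_def)
    then show "(\<lambda>n. a i n - (stat_pi p 0 * c 0 + stat_pi p 1 * c 1) / entropy_rate p * ln (real n)) \<in> O(\<lambda>_. 1)"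
      unfolding K_def .
  qed
qed

end
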